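(* Let $T$ be an equidistant tree with $n$ leaves and ultrametric $u$, and let $t_1<t_2<\dots<t_k$ ($k\le n-1$) be its speciation times. For $i=1,\dots,k$ let $T^i$ be the equidistant tree whose ultrametric $w^i$ is given by $w^i_{pq}=\max\{2t_i,\,u_{pq}\}$ for all leaves $p<q$ (so $T^1=T$ and $T^k$ is the star tree). Then the tropical line segment in $\mathcal{U}_n$ from $u$ to the origin (the ultrametric of the star tree with $n$ leaves) is the union of the ordinary line segments between the ultrametrics $w^i$ and $w^{i+1}$ of $T^i$ and $T^{i+1}$, for $i=1,\dots,k-1$.
   Context: Max-plus arithmetic: $a\oplus b=\max\{a,b\}$, $a\odot b=a+b$; $e=\binom n2$; points of $\mathbb{R}^e$ (coordinates indexed by pairs $p<q$ of leaves in $\{1,\dots,n\}$) are considered modulo $\mathbb{R}\mathbf 1$, so the origin is the class of constant vectors. An equidistant tree is a rooted phylogenetic tree with nonnegative edge lengths and all root-to-leaf distances equal; its ultrametric $u$ is the vector of pairwise leaf distances $u_{pq}$ (for all distinct $p,q,r$ the maximum of $u_{pq},u_{pr},u_{qr}$ is attained at least twice); $\mathcal U_n$ is the set of ultrametrics in $\mathbb{R}^e/\mathbb{R}\mathbf 1$. The star tree has all leaves attached to the root; its ultrametric is constant. The speciation times of $T$ are the distinct values of $u_{pq}/2$, listed in increasing order $t_1<\dots<t_k$ (the heights above the leaves of the internal nodes). The tropical line segment between $x$ and $y$ is $\{a\odot x\oplus b\odot y:a,b\in\mathbb{R}\}$. *)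

theory Defs
  imports Main "HOL-Library.Set_Algebras" Complex_Main
begin

text \<open>Points of R^e, e = n choose 2, are represented as functions
  x :: nat \<Rightarrow> nat \<Rightarrow> real, of which only the values x p q with
  1 \<le> p < q \<le> n are relevant.\<close>

type_synonym pvec = "nat \<Rightarrow> nat \<Rightarrow> real"

definition leaf_pairs :: "nat \<Rightarrow> (nat \<times> nat) set" where
  "leaf_pairs n = {(p, q). 1 \<le> p \<and> p < q \<and> q \<le> n}"

text \<open>Equality in R^e / R1 (modulo adding a constant vector).\<close>
definition mod_eq :: "nat \<Rightarrow> pvec \<Rightarrow> pvec \<Rightarrow> bool" where
  "mod_eq n x y \<longleftrightarrow> (\<exists>c::real. \<forall>(p, q) \<in> leaf_pairs n. x p q = y p q + c)"

definition sym_dist :: "pvec \<Rightarrow> nat \<Rightarrow> nat \<Rightarrow> real" where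
  "sym_dist u p q = (if p < q then u p q else u q p)"

definition is_ultrametric :: "nat \<Rightarrow> pvec \<Rightarrow> bool" where
  "is_ultrametric n u \<longleftrightarrow>
     (\<forall>(p, q) \<in> leaf_pairs n. 0 \<le> u p q) \<and>
     (\<forall>p q r. p \<in> {1..n} \<and> q \<in> {1..n} \<and> r \<in> {1..n} \<and> p \<noteq> q \<and> p \<noteq> r \<and> q \<noteq> r \<longrightarrow>
        sym_dist u p q \<le> max (sym_dist u p r) (sym_dist u q r) \<and>
        sym_dist u p r \<le> max (sym_dist u p q) (sym_dist u q r) \<and>
        sym_dist u q r \<le> max (sym_dist u p q) (sym_dist u p r))"

definition speciation_times :: "nat \<Rightarrow> pvec \<Rightarrow> real set" where
  "speciation_times n u = {u p q / 2 | p q. (p, q) \<in> leaf_pairs n}"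

text \<open>Tropical line segment between x and y, as a subset of R^e / R1
  (represented by the set of all representatives of its classes).\<close>
definition trop_segment :: "nat \<Rightarrow> pvec \<Rightarrow> pvec \<Rightarrow> pvec set" where
  "trop_segment n x y =
     {z. \<exists>a b::real. mod_eq n z (\<lambda>p q. max (a + x p q) (b + y p q))}"

definition ord_segment :: "nat \<Rightarrow> pvec \<Rightarrow> pvec \<Rightarrow> pvec set" where
  "ord_segment n x y =
     {z. \<exists>l::real. 0 \<le> l \<and> l \<le> 1 \<and> mod_eq n z (\<lambda>p q. (1 - l) * x p q + l * y p q)}"

end

theory Submission
  imports Defs
begin

lemma mod_eq_trans:
  "mod_eq n x y \<Longrightarrow> mod_eq n y z \<Longrightarrow> mod_eq n x z"
  unfolding mod_eq_def
  apply (elim exE) subgoal for c d by (rule exI[of _ "c + d"]) fastforce done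

lemma mod_eq_cong:
  "(\<And>p q. (p, q) \<in> leaf_pairs n \<Longrightarrow> x p q = y p q + c) \<Longrightarrow> mod_eq n x y"
  unfolding mod_eq_def by blast

lemma trop_char:
  "trop_segment n u (\<lambda>p q. 0) = {z. \<exists>c. mod_eq n z (\<lambda>p q. max c (u p q))}"
proof (intro set_eqI iffI)
  fix z assume "z \<in> trop_segment n u (\<lambda>p q. 0)"
  then obtain a b where h: "mod_eq n z (\<lambda>p q. max (a + u p q) (b + 0))"
    unfolding trop_segment_def by blast
  have "mod_eq n (\<lambda>p q. max (a + u p q) (b + 0)) (\<lambda>p q. max (b - a) (u p q))"
    by (rule mod_eq_cong[where c = a]) auto
  with h show "z \<in> {z. \<exists>c. mod_eq n z (\<lambda>p q. max c (u p q))}"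
    using mod_eq_trans by blast
next
  fix z assume "z \<in> {z. \<exists>c. mod_eq n z (\<lambda>p q. max c (u p q))}"
  then obtain c where h: "mod_eq n z (\<lambda>p q. max c (u p q))" by blast
  have "mod_eq n (\<lambda>p q. max c (u p q)) (\<lambda>p q. max (0 + u p q) (c + 0))"
    by (rule mod_eq_cong[where c = 0]) auto
  with h show "z \<in> trop_segment n u (\<lambda>p q. 0)"
    unfolding trop_segment_def using mod_eq_trans by blast
qed

theorem theorem4:
  fixes n k :: nat and u :: pvec and t :: "nat \<Rightarrow> real"
  assumes ultra: "is_ultrametric n u"
    and t_mono: "strict_mono_on {1..k} t"
    and t_range: "t ` {1..k} = speciation_times n u"
    and not_star: "k \<ge> 2"
  shows "trop_segment n u (\<lambda>p q. 0) =
         (\<Union>i \<in> {1..<k}. ord_segment n (\<lambda>p q. max (2 * t i) (u p q))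
                                       (\<lambda>p q. max (2 * t (Suc i)) (u p q)))"
proof -
  have F1: "\<exists>j\<in>{1..k}. u p q = 2 * t j" if "(p, q) \<in> leaf_pairs n" for p q
  proof -
    have "u p q / 2 \<in> t ` {1..k}" using t_range that unfolding speciation_times_def by blast
    then obtain j where "j \<in> {1..k}" "u p q / 2 = t j" by blast
    then show ?thesis by (intro bexI[of _ j]) auto
  qed
  have lt: "t j < t j'" if "j \<in> {1..k}" "j' \<in> {1..k}" "j < j'" for j j'
    using strict_mono_onD[OF t_mono] that by blast
  have le: "t j \<le> t j'" if "j \<in> {1..k}" "j' \<in> {1..k}" "j \<le> j'" for j j'
    using lt[OF that(1,2)] that(3) by (cases "j = j'") auto
  have gap: "u p q \<le> 2 * t i \<or> 2 * t (Suc i) \<le> u p q"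
    if pq: "(p, q) \<in> leaf_pairs n" and ii: "i \<in> {1..<k}" for p q i
  proof -
    obtain j where j: "j \<in> {1..k}" "u p q = 2 * t j" using F1[OF pq] by blast
    show ?thesis
    proof (cases "j \<le> i")
      case True then show ?thesis using le[of j i] j ii by auto
    next
      case False then show ?thesis using le[of "Suc i" j] j ii by auto
    qed
  qed
  have keyB: "(1 - l) * max (2 * t i) (u p q) + l * max (2 * t (Suc i)) (u p q)
      = max ((1 - l) * (2 * t i) + l * (2 * t (Suc i))) (u p q)"
    if "(p, q) \<in> leaf_pairs n" "i \<in> {1..<k}" "0 \<le> l" "l \<le> 1" for p q i l
  proof -
    have tt: "t i \<le> t (Suc i)" using le[of i "Suc i"] that(2) by auto
    let ?c = "(1 - l) * (2 * t i) + l * (2 * t (Suc i))"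
    have c1: "?c - 2 * t i = l * (2 * t (Suc i) - 2 * t i)" by (simp add: algebra_simps)
    have c2: "2 * t (Suc i) - ?c = (1 - l) * (2 * t (Suc i) - 2 * t i)" by (simp add: algebra_simps)
    have "0 \<le> l * (2 * t (Suc i) - 2 * t i)" using that tt by simp
    moreover have "0 \<le> (1 - l) * (2 * t (Suc i) - 2 * t i)" using that tt by simp
    ultimately have cb: "2 * t i \<le> ?c" "?c \<le> 2 * t (Suc i)" using c1 c2 by linarith+
    from gap[OF that(1,2)] show ?thesis
    proof
      assume h: "u p q \<le> 2 * t i"
      have "max (2 * t i) (u p q) = 2 * t i" using h by simp
      moreover have "max (2 * t (Suc i)) (u p q) = 2 * t (Suc i)" using h tt by simp
      moreover have "max ?c (u p q) = ?c" using h cb by simp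
      ultimately show ?thesis by simp
    next
      assume h: "2 * t (Suc i) \<le> u p q"
      then have "(1 - l) * max (2 * t i) (u p q) + l * max (2 * t (Suc i)) (u p q) = u p q"
        using tt by (simp add: max_def algebra_simps)
      then show ?thesis using cb h by simp
    qed
  qed
  show ?thesis unfolding trop_char
  proof (intro set_eqI iffI)
    fix z assume "z \<in> (\<Union>i \<in> {1..<k}. ord_segment n (\<lambda>p q. max (2 * t i) (u p q))
                                       (\<lambda>p q. max (2 * t (Suc i)) (u p q)))"
    then obtain i l where i: "i \<in> {1..<k}" and l: "0 \<le> l" "l \<le> 1"
      and h: "mod_eq n z (\<lambda>p q. (1 - l) * max (2 * t i) (u p q) + l * max (2 * t (Suc i)) (u p q))"
      unfolding ord_segment_def by blast
    have "mod_eq n (\<lambda>p q. (1 - l) * max (2 * t i) (u p q) + l * max (2 * t (Suc i)) (u p q))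
        (\<lambda>p q. max ((1 - l) * (2 * t i) + l * (2 * t (Suc i))) (u p q))"
      by (rule mod_eq_cong[where c = 0]) (simp add: keyB[OF _ i l])
    with h show "z \<in> {z. \<exists>c. mod_eq n z (\<lambda>p q. max c (u p q))}"
      using mod_eq_trans by blast
  next
    fix z assume "z \<in> {z. \<exists>c. mod_eq n z (\<lambda>p q. max c (u p q))}"
    then obtain c where h: "mod_eq n z (\<lambda>p q. max c (u p q))" by blast
    have k1: "1 \<in> {1..k}" "k \<in> {1..k}" using not_star by auto
    have ulo: "2 * t 1 \<le> u p q" "u p q \<le> 2 * t k" if "(p, q) \<in> leaf_pairs n" for p q
      using F1[OF that] le k1 by fastforce+
    have "\<exists>i l. i \<in> {1..<k} \<and> 0 \<le> l \<and> l \<le> 1 \<and>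
        mod_eq n (\<lambda>p q. max c (u p q))
         (\<lambda>p q. (1 - l) * max (2 * t i) (u p q) + l * max (2 * t (Suc i)) (u p q))"
    proof (cases "c \<le> 2 * t 1")
      case True
      have "mod_eq n (\<lambda>p q. max c (u p q))
         (\<lambda>p q. (1 - 0) * max (2 * t 1) (u p q) + 0 * max (2 * t (Suc 1)) (u p q))"
      proof (rule mod_eq_cong[where c = 0])
        fix p q assume pq: "(p, q) \<in> leaf_pairs n"
        have "c \<le> u p q" "2 * t 1 \<le> u p q" using ulo(1)[OF pq] True by linarith+
        then show "max c (u p q) = (1 - 0) * max (2 * t 1) (u p q) + 0 * max (2 * t (Suc 1)) (u p q) + 0"
          by simp
      qed
      then show ?thesis using not_star by (intro exI[of _ 1] exI[of _ 0]) auto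
    next
      case c1: False
      show ?thesis
      proof (cases "2 * t k \<le> c")
        case True
        have "mod_eq n (\<lambda>p q. max c (u p q))
         (\<lambda>p q. (1 - 1) * max (2 * t (k - 1)) (u p q) + 1 * max (2 * t (Suc (k - 1))) (u p q))"
        proof (rule mod_eq_cong[where c = "c - 2 * t k"])
          fix p q assume pq: "(p, q) \<in> leaf_pairs n"
          have a: "u p q \<le> 2 * t k" "u p q \<le> c" using ulo(2)[OF pq] True by linarith+
          have sk: "Suc (k - 1) = k" using not_star by simp
          show "max c (u p q) = (1 - 1) * max (2 * t (k - 1)) (u p q) + 1 * max (2 * t (Suc (k - 1))) (u p q) + (c - 2 * t k)"
            using a unfolding sk by simp
        qed
        then show ?thesis using not_star by (intro exI[of _ "k - 1"] exI[of _ 1]) auto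
      next
        case c2: False
        define S where "S = {j \<in> {1..k}. 2 * t j \<le> c}"
        define i where "i = Max S"
        have Sf: "finite S" and Sne: "1 \<in> S" using c1 k1 unfolding S_def by auto
        have iS: "i \<in> S" unfolding i_def using Sf Sne Max_in by blast
        have ik: "i < k" using iS c2 unfolding S_def by (cases "i = k") auto
        have i1: "1 \<le> i" using iS unfolding S_def by auto
        have ti: "2 * t i \<le> c" using iS unfolding S_def by auto
        have tsi: "c < 2 * t (Suc i)"
        proof (rule ccontr)
          assume "\<not> c < 2 * t (Suc i)"
          then have "Suc i \<in> S" unfolding S_def using ik by auto
          then have "Suc i \<le> i" unfolding i_def using Sf Max_ge by blast
          then show False by simp
        qed
        have tt: "t i < t (Suc i)" using ti tsi by linarith
        define l where "l = (c - 2 * t i) / (2 * t (Suc i) - 2 * t i)"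
        have l0: "0 \<le> l" "l \<le> 1" unfolding l_def using ti tsi tt by auto
        have cc: "c = (1 - l) * (2 * t i) + l * (2 * t (Suc i))"
        proof -
          have d: "2 * t (Suc i) - 2 * t i \<noteq> 0" using tt by simp
          have "l * (2 * t (Suc i) - 2 * t i) = c - 2 * t i" unfolding l_def using d by simp
          moreover have "(1 - l) * (2 * t i) + l * (2 * t (Suc i)) = 2 * t i + l * (2 * t (Suc i) - 2 * t i)"
            by (simp add: algebra_simps)
          ultimately show ?thesis by simp
        qed
        have iin: "i \<in> {1..<k}" using i1 ik by auto
        have "mod_eq n (\<lambda>p q. max c (u p q))
         (\<lambda>p q. (1 - l) * max (2 * t i) (u p q) + l * max (2 * t (Suc i)) (u p q))"
          by (rule mod_eq_cong[where c = 0]) (simp add: keyB[OF _ iin l0] cc[symmetric])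
        then show ?thesis using iin l0 by blast
      qed
    qed
    then obtain i l where "i \<in> {1..<k}" "0 \<le> l" "l \<le> 1"
      "mod_eq n (\<lambda>p q. max c (u p q))
         (\<lambda>p q. (1 - l) * max (2 * t i) (u p q) + l * max (2 * t (Suc i)) (u p q))" by blast
    then show "z \<in> (\<Union>i \<in> {1..<k}. ord_segment n (\<lambda>p q. max (2 * t i) (u p q))
                                       (\<lambda>p q. max (2 * t (Suc i)) (u p q)))"
      unfolding ord_segment_def using h mod_eq_trans by blast
  qed
qed

end
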